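(* There exists a constant $c>0$ such that for all $N$ large enough, all $n\in\mathbb{Z}_+$ and every initial law of $Y(0)$, a Markov chain $Y$ on $\{0,\dots,N-4\}$ with kernel $R$ satisfies $$\mathbb{P}[\tau_0^Y>n]\le e^{1-cn/N^3},\qquad \tau_0^Y=\inf\{n\in\mathbb{Z}_+: Y(n)=0\}.$$
   Context: $R$ is the birth–death Markov kernel on $\{0,\dots,N-4\}$ with $R(x,x-1)=\frac{x(N-x)}{N(N-1)}$, $R(x,x+1)=\frac{N-x-1}{N(N-1)}$ for $x\le N-5$, all other off-diagonal entries $0$, and diagonal entries making rows sum to 1. *)

theory Defs
  imports Complex_Main "HOL-Library.FuncSet"
begin

definition Rdown :: "nat \<Rightarrow> nat \<Rightarrow> real" where
  "Rdown N x = real x * (real N - real x) / (real N * (real N - 1))"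

definition Rup :: "nat \<Rightarrow> nat \<Rightarrow> real" where
  "Rup N x = (if x + 5 \<le> N then (real N - real x - 1) / (real N * (real N - 1)) else 0)"

definition R :: "nat \<Rightarrow> nat \<Rightarrow> nat \<Rightarrow> real" where
  "R N x y =
    (if x \<le> N - 4 \<and> y \<le> N - 4 then
       (if y + 1 = x then Rdown N x
        else if y = x + 1 then Rup N x
        else if y = x then 1 - Rdown N x - Rup N x
        else 0)
     else 0)"

definition init_law :: "nat \<Rightarrow> (nat \<Rightarrow> real) \<Rightarrow> bool" where
  "init_law N \<mu> \<longleftrightarrow> (\<forall>x. 0 \<le> \<mu> x) \<and> (\<forall>x. N - 4 < x \<longrightarrow> \<mu> x = 0)
                      \<and> (\<Sum>x\<le>N - 4. \<mu> x) = 1"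

definition path_prob :: "nat \<Rightarrow> (nat \<Rightarrow> real) \<Rightarrow> nat \<Rightarrow> (nat \<Rightarrow> nat) \<Rightarrow> real" where
  "path_prob N \<mu> n p = \<mu> (p 0) * (\<Prod>i<n. R N (p i) (p (Suc i)))"

text \<open>P[tau_0 > n] = P[Y(0) /= 0, ..., Y(n) /= 0]: total mass of paths avoiding 0 up to time n.\<close>
definition tail_hit0 :: "nat \<Rightarrow> (nat \<Rightarrow> real) \<Rightarrow> nat \<Rightarrow> real" where
  "tail_hit0 N \<mu> n = (\<Sum>p \<in> Pi\<^sub>E {..n} (\<lambda>_. {1..N - 4}). path_prob N \<mu> n p)"

end

theory Submission
  imports Defs
begin

lemma sum_PiE_insert_split:
  assumes "k \<notin> I"
  shows "(\<Sum>p\<in>Pi\<^sub>E (insert k I) T. h p) = (\<Sum>q\<in>Pi\<^sub>E I T. \<Sum>y\<in>T k. h (q(k:=y)))"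
proof -
  have "(\<Sum>p\<in>Pi\<^sub>E (insert k I) T. h p) = (\<Sum>x\<in>T k \<times> Pi\<^sub>E I T. h ((\<lambda>(y, g). g(k := y)) x))"
    unfolding PiE_insert_eq by (rule sum.reindex[OF inj_combinator[OF assms], unfolded comp_def])
  also have "\<dots> = (\<Sum>y\<in>T k. \<Sum>q\<in>Pi\<^sub>E I T. h (q(k:=y)))"
    by (simp add: sum.cartesian_product split_def)
  also have "\<dots> = (\<Sum>q\<in>Pi\<^sub>E I T. \<Sum>y\<in>T k. h (q(k:=y)))"
    by (rule sum.swap)
  finally show ?thesis .
qed

definition SS :: "nat \<Rightarrow> (nat \<Rightarrow> real) \<Rightarrow> nat \<Rightarrow> (nat \<Rightarrow> real) \<Rightarrow> real" where
  "SS N \<mu> n g = (\<Sum>p\<in>Pi\<^sub>E {..n} (\<lambda>_. {1..N-4}). path_prob N \<mu> n p * g (p n))"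

definition KK :: "nat \<Rightarrow> (nat \<Rightarrow> real) \<Rightarrow> nat \<Rightarrow> real" where
  "KK N g x = (\<Sum>y\<in>{1..N-4}. R N x y * g y)"

lemma path_prob_upd:
  "path_prob N \<mu> (Suc n) (q(Suc n := y)) = path_prob N \<mu> n q * R N (q n) y"
proof -
  have "(\<Prod>i<n. R N ((q(Suc n := y)) i) ((q(Suc n := y)) (Suc i))) = (\<Prod>i<n. R N (q i) (q (Suc i)))"
    by (rule prod.cong) auto
  thus ?thesis unfolding path_prob_def by (simp add: prod.lessThan_Suc mult.assoc)
qed

lemma SS_step: "SS N \<mu> (Suc n) g = SS N \<mu> n (KK N g)"
proof -
  have "SS N \<mu> (Suc n) g = (\<Sum>q\<in>Pi\<^sub>E {..n} (\<lambda>_. {1..N-4}). \<Sum>y\<in>{1..N-4}.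
          path_prob N \<mu> (Suc n) (q(Suc n := y)) * g y)"
    unfolding SS_def atMost_Suc by (subst sum_PiE_insert_split) auto
  also have "\<dots> = (\<Sum>q\<in>Pi\<^sub>E {..n} (\<lambda>_. {1..N-4}). \<Sum>y\<in>{1..N-4}.
          path_prob N \<mu> n q * (R N (q n) y * g y))"
    by (simp add: path_prob_upd mult.assoc)
  also have "\<dots> = SS N \<mu> n (KK N g)"
    unfolding SS_def KK_def by (simp add: sum_distrib_left)
  finally show ?thesis .
qed

lemma KK_formula:
  assumes x: "1 \<le> x" "x \<le> N - 4"
  shows "KK N f x = (if 2 \<le> x then Rdown N x * f (x-1) else 0) + (1 - Rdown N x - Rup N x) * f x
                    + (if x+1 \<le> N-4 then Rup N x * f (x+1) else 0)"
proof -
  have "KK N f x = (\<Sum>y\<in>{1..N-4}. (if y = x-1 then Rdown N x * f y else 0)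
      + (if y = x then (1 - Rdown N x - Rup N x) * f y else 0) + (if y = x+1 then Rup N x * f y else 0))"
    unfolding KK_def
  proof (rule sum.cong[OF refl])
    fix y assume y: "y \<in> {1..N-4}"
    show "R N x y * f y = (if y = x-1 then Rdown N x * f y else 0)
      + (if y = x then (1 - Rdown N x - Rup N x) * f y else 0) + (if y = x+1 then Rup N x * f y else 0)"
      using x y unfolding R_def by auto
  qed
  also have "\<dots> = (if 2 \<le> x then Rdown N x * f (x-1) else 0) + (1 - Rdown N x - Rup N x) * f x
                    + (if x+1 \<le> N-4 then Rup N x * f (x+1) else 0)"
    using x by (simp add: sum.distrib) linarith
  finally show ?thesis .
qed

lemma d_minus_u:
  assumes "2 \<le> x" "x \<le> N - 4" "10 \<le> N"
  shows "Rdown N x - Rup N x \<ge> 1 / (real N * (real N - 1))"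
proof -
  have N: "real N * (real N - 1) > 0" using assms by simp
  have xr: "2 \<le> real x" "real x \<le> real N - 4" using assms by auto
  have "1 \<le> real x * (real N - real x) - (if x + 5 \<le> N then real N - real x - 1 else 0)"
  proof (cases "x + 5 \<le> N")
    case True
    have "0 \<le> (real x - 1) * (real N - real x)" using xr by simp
    then show ?thesis using True by (simp add: algebra_simps)
  next
    case False
    have "2 * 4 \<le> real x * (real N - real x)" using xr by (intro mult_mono) auto
    then show ?thesis using False by simp
  qed
  hence "1 / (real N * (real N - 1)) \<le> (real x * (real N - real x) - (if x + 5 \<le> N then real N - real x - 1 else 0)) / (real N * (real N - 1))"
    using N by (intro divide_right_mono) auto
  thus ?thesis unfolding Rdown_def Rup_def by (auto simp: diff_divide_distrib)
qed

definition VV :: "nat \<Rightarrow> nat \<Rightarrow> real" where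
  "VV N x = 2 * real N - 1 + real x"

lemma KK_V:
  assumes N: "10 \<le> N" and x: "1 \<le> x" "x \<le> N - 4"
  shows "KK N (VV N) x \<le> (1 - 1 / (3 * real N ^ 3)) * VV N x"
proof (cases "x = 1")
  case True
  have d: "Rdown N 1 = 1 / real N" using N unfolding Rdown_def by (simp add: field_simps)
  have "real N * 2 \<le> real N * real N" using N by (intro mult_left_mono) auto
  hence "real N * 2 \<le> 2 + real N * real N" by linarith
  hence u: "Rup N 1 \<le> 1" using N unfolding Rup_def by (simp add: field_simps)
  have "KK N (VV N) x = (1 - Rdown N 1 - Rup N 1) * (2 * real N) + Rup N 1 * (2 * real N + 1)"
    using True N by (simp add: KK_formula VV_def) linarith
  also have "\<dots> = 2 * real N - 2 + Rup N 1" using d N by (simp add: field_simps)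
  also have "\<dots> \<le> 2 * real N - 1" using u by simp
  also have "\<dots> \<le> (1 - 1 / (3 * real N ^ 3)) * VV N x"
  proof -
    have "1 * 3 \<le> real N * (real N * 3)" using N by (intro mult_mono) auto
    hence "2 * real N / (3 * real N ^ 3) \<le> 1" using N by (simp add: field_simps power3_eq_cube)
    then show ?thesis using True by (simp add: VV_def algebra_simps)
  qed
  finally show ?thesis .
next
  case False
  hence x2: "2 \<le> x" using x by simp
  have du: "Rdown N x - Rup N x \<ge> 1 / (real N * (real N - 1))" using d_minus_u[OF x2 x(2) N] .
  have "KK N (VV N) x = VV N x - (Rdown N x - Rup N x)"
  proof (cases "x + 1 \<le> N - 4")
    case True
    then show ?thesis using x2 x N by (simp add: KK_formula VV_def of_nat_diff algebra_simps)
  next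
    case False
    hence "Rup N x = 0" unfolding Rup_def by simp
    then show ?thesis using x2 x N False by (simp add: KK_formula VV_def of_nat_diff algebra_simps)
  qed
  also have "\<dots> \<le> VV N x - 1 / (real N * (real N - 1))" using du by simp
  also have "\<dots> \<le> (1 - 1 / (3 * real N ^ 3)) * VV N x"
  proof -
    have V: "VV N x \<le> 3 * real N" "0 \<le> VV N x" using x N by (auto simp: VV_def)
    have "VV N x / (3 * real N ^ 3) \<le> 3 * real N / (3 * real N ^ 3)"
      using V N by (intro divide_right_mono) auto
    also have "\<dots> = 1 / (real N * real N)" using N by (simp add: field_simps power3_eq_cube)
    also have "\<dots> \<le> 1 / (real N * (real N - 1))" using N
      by (intro divide_left_mono mult_mono) auto
    finally show ?thesis by (simp add: algebra_simps)
  qed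
  finally show ?thesis .
qed

lemma R_nonneg:
  assumes N: "10 \<le> N" and x: "x \<in> {1..N-4}" and y: "y \<in> {1..N-4}"
  shows "0 \<le> R N x y"
proof -
  have xr: "1 \<le> real x" "real x \<le> real N - 4" using x N by auto
  have Nr: "real N * (real N - 1) > 0" using N by simp
  have d: "0 \<le> Rdown N x" using xr Nr unfolding Rdown_def by simp
  have u: "0 \<le> Rup N x" using xr Nr unfolding Rup_def by simp
  have "real x * (real N - real x) + (real N - real x - 1) \<le> (real x + 1) * (real N - real x)"
    by (simp add: algebra_simps)
  also have "\<dots> \<le> (real N - 3) * (real N - 1)" using xr by (intro mult_mono) auto
  also have "\<dots> \<le> real N * (real N - 1)" using xr by (intro mult_right_mono) auto
  finally have "real x * (real N - real x) + (real N - real x - 1) \<le> real N * (real N - 1)" .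
  hence "(real x * (real N - real x) + (real N - real x - 1)) / (real N * (real N - 1)) \<le> 1"
    using Nr by simp
  hence "Rdown N x + Rup N x \<le> 1" unfolding Rdown_def Rup_def
    by (auto simp: add_divide_distrib) (smt (verit) divide_nonneg_pos xr Nr)
  thus ?thesis using d u unfolding R_def by auto
qed

lemma N1: "10 \<le> N \<Longrightarrow> 1 * 1 \<le> 3 * real N ^ 3"
proof -
  assume "10 \<le> N"
  hence "1 \<le> real N ^ 3" by (intro one_le_power) simp
  thus ?thesis by simp
qed

lemma path_prob_nonneg:
  assumes N: "10 \<le> N" and mu: "init_law N \<mu>" and p: "p \<in> Pi\<^sub>E {..n} (\<lambda>_. {1..N-4})"
  shows "0 \<le> path_prob N \<mu> n p"
proof -
  have "0 \<le> \<mu> (p 0)" using mu unfolding init_law_def by auto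
  moreover have "0 \<le> (\<Prod>i<n. R N (p i) (p (Suc i)))"
    using p by (intro prod_nonneg R_nonneg[OF N]) (auto simp: PiE_def Pi_def)
  ultimately show ?thesis unfolding path_prob_def by simp
qed

lemma SS_mono:
  assumes N: "10 \<le> N" and mu: "init_law N \<mu>" and g: "\<And>x. x \<in> {1..N-4} \<Longrightarrow> g x \<le> g' x"
  shows "SS N \<mu> n g \<le> SS N \<mu> n g'"
  unfolding SS_def
proof (rule sum_mono)
  fix p assume p: "p \<in> Pi\<^sub>E {..n} (\<lambda>_. {1..N-4})"
  have "p n \<in> {1..N-4}" using p by (auto simp: PiE_def Pi_def)
  thus "path_prob N \<mu> n p * g (p n) \<le> path_prob N \<mu> n p * g' (p n)"
    using path_prob_nonneg[OF N mu p] g by (intro mult_left_mono) auto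
qed

lemma SS_scale: "SS N \<mu> n (\<lambda>x. c * g x) = c * SS N \<mu> n g"
  unfolding SS_def by (simp add: sum_distrib_left algebra_simps)

lemma SS_iter:
  assumes N: "10 \<le> N" and mu: "init_law N \<mu>"
  shows "SS N \<mu> n (VV N) \<le> (1 - 1 / (3 * real N ^ 3)) ^ n * SS N \<mu> 0 (VV N)"
proof (induction n)
  case 0
  then show ?case by simp
next
  case (Suc n)
  let ?l = "1 - 1 / (3 * real N ^ 3)"
  have l: "0 \<le> ?l"
  proof -
    have "1 * 1 \<le> 3 * real N ^ 3" using N1[OF N] by (auto simp add: divide_le_eq_1)
    hence "1 / (3 * real N ^ 3) \<le> 1" by (auto simp add: divide_le_eq_1)
    thus ?thesis by simp
  qed
  have "SS N \<mu> (Suc n) (VV N) = SS N \<mu> n (KK N (VV N))" by (rule SS_step)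
  also have "\<dots> \<le> SS N \<mu> n (\<lambda>x. ?l * VV N x)"
    using KK_V[OF N] by (intro SS_mono[OF N mu]) auto
  also have "\<dots> = ?l * SS N \<mu> n (VV N)" by (rule SS_scale)
  also have "\<dots> \<le> ?l * (?l ^ n * SS N \<mu> 0 (VV N))" using Suc l by (intro mult_left_mono) auto
  finally show ?case by simp
qed

lemma SS_zero:
  "SS N \<mu> 0 g = (\<Sum>y\<in>{1..N-4}. \<mu> y * g y)"
proof -
  have "{..0::nat} = insert 0 {}" by auto
  hence "SS N \<mu> 0 g = (\<Sum>p\<in>Pi\<^sub>E (insert 0 {}) (\<lambda>_. {1..N-4}). path_prob N \<mu> 0 p * g (p 0))"
    unfolding SS_def by simp
  also have "\<dots> = (\<Sum>y\<in>{1..N-4}. \<mu> y * g y)"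
    by (subst sum_PiE_insert_split) (auto simp: path_prob_def)
  finally show ?thesis .
qed

lemma SS0_bound:
  assumes N: "10 \<le> N" and mu: "init_law N \<mu>"
  shows "SS N \<mu> 0 (VV N) \<le> 3 * real N"
proof -
  have "SS N \<mu> 0 (VV N) \<le> (\<Sum>y\<in>{1..N-4}. \<mu> y * (3 * real N))"
    unfolding SS_zero using mu N
    by (intro sum_mono mult_left_mono) (auto simp: init_law_def VV_def)
  also have "\<dots> = (\<Sum>y\<in>{1..N-4}. \<mu> y) * (3 * real N)" by (simp add: sum_distrib_right)
  also have "(\<Sum>y\<in>{1..N-4}. \<mu> y) \<le> (\<Sum>y\<le>N-4. \<mu> y)"
    using mu by (intro sum_mono2) (auto simp: init_law_def)
  also have "\<dots> = 1" using mu by (simp add: init_law_def)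
  finally show ?thesis using N by simp
qed

theorem lemma5p7:
  shows "\<exists>c::real > 0. \<exists>N0::nat. \<forall>N \<ge> N0. \<forall>n::nat. \<forall>\<mu>. init_law N \<mu> \<longrightarrow>
           tail_hit0 N \<mu> n \<le> exp (1 - c * real n / real N ^ 3)"
proof (intro exI[of _ "1/3"] conjI exI[of _ 10] allI impI)
  show "(0::real) < 1/3" by simp
  fix N n \<mu> assume N: "10 \<le> N" and mu: "init_law N \<mu>"
  let ?e = "1 / (3 * real N ^ 3)"
  have Npos: "0 < real N" using N by simp
  have l0: "0 \<le> 1 - ?e"
  proof -
    have "1 * 1 \<le> 3 * real N ^ 3" using N1[OF N] by (auto simp add: divide_le_eq_1)
    hence "?e \<le> 1" by (auto simp add: divide_le_eq_1)
    thus ?thesis by simp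
  qed
  have "tail_hit0 N \<mu> n = SS N \<mu> n (\<lambda>_. 1)" unfolding tail_hit0_def SS_def by simp
  also have "\<dots> \<le> SS N \<mu> n (\<lambda>x. (1 / (2 * real N)) * VV N x)"
    using N Npos by (intro SS_mono[OF N mu]) (auto simp: VV_def field_simps)
  also have "\<dots> = (1 / (2 * real N)) * SS N \<mu> n (VV N)" by (rule SS_scale)
  also have "\<dots> \<le> (1 / (2 * real N)) * ((1 - ?e) ^ n * (3 * real N))"
  proof -
    have l: "0 \<le> 1 - ?e"
    proof -
      have "1 * 1 \<le> 3 * real N ^ 3" using N1[OF N] by (auto simp add: divide_le_eq_1)
      hence "?e \<le> 1" by (auto simp add: divide_le_eq_1)
      thus ?thesis by simp
    qed
    have "SS N \<mu> n (VV N) \<le> (1 - ?e) ^ n * (3 * real N)"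
      using SS_iter[OF N mu] SS0_bound[OF N mu] l
      by (meson mult_left_mono order_trans zero_le_power)
    thus ?thesis using Npos by (intro mult_left_mono) auto
  qed
  also have "\<dots> = 3/2 * (1 - ?e) ^ n" using Npos by (simp add: field_simps)
  also have "\<dots> \<le> exp 1 * exp (- ?e) ^ n"
  proof (intro mult_mono power_mono)
    have "1 + 1 \<le> exp (1::real)" by (rule exp_ge_add_one_self)
    thus "3/2 \<le> exp (1::real)" by simp
    show "1 - ?e \<le> exp (- ?e)" using exp_ge_add_one_self[of "- ?e"] by simp
    have "1 * 1 \<le> 3 * real N ^ 3" using N1[OF N] by (auto simp add: divide_le_eq_1)
    thus "0 \<le> 1 - ?e" by (auto simp add: divide_le_eq_1)
  qed (auto intro: zero_le_power l0)
  also have "\<dots> = exp (1 - 1/3 * real n / real N ^ 3)"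
  proof -
    have "exp 1 * exp (- ?e) ^ n = exp (1 + real n * (- ?e))"
      by (simp only: exp_add exp_of_nat_mult)
    also have "1 + real n * (- ?e) = 1 - 1/3 * real n / real N ^ 3" by simp
    finally show ?thesis .
  qed
  finally show "tail_hit0 N \<mu> n \<le> exp (1 - 1/3 * real n / real N ^ 3)" .
qed

end
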